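(* In the fixed-flow two-parallel-path setting, for every integer $t\ge L$, $$\frac{b_{d_1d}(t-m+1)}{b_{d_2d}(t-n+1)}\;\ge\;\min\big(r_{d_1d}(t-m+1),\,r_{d_1d}(t-n+1)\big)\;\ge\; r_{\min}(t).$$
   Context: Model (linear decision rule). Directed graph $G=(V,E)$, source $s$, destination $d$, discrete time; pheromone $p_{uv}(t)$, forward flows $f_v(t)$, backward flows $b_v(t)$; leakages $l_v\in[0,1]$; decay $\delta\in(0,1)$; exogenous inputs $f_s(t),b_d(t)$. Edge flows: $f_{uv}(t)=f_u(t)p_{uv}(t)/\sum_{z:(u,z)\in E}p_{uz}(t)$, $b_{uv}(t)=b_v(t)p_{uv}(t)/\sum_{z:(z,v)\in E}p_{zv}(t)$ (at a vertex with a single outgoing, resp. incoming, edge the whole flow goes along it). Updates: $f_v(t+1)=(1-l_v)\sum_{z:(z,v)\in E}f_{zv}(t)$ for $v\neq s$, $b_u(t+1)=(1-l_u)\sum_{z:(u,z)\in E}b_{uz}(t)$ for $u\ne d$, $p_{uv}(t+1)=\delta(p_{uv}(t)+f_{uv}(t)+b_{uv}(t))$. Two parallel paths: $G$ is the union of directed paths $P_1,P_2$ from $s$ to $d$ sharing only $s,d$; $s_1,s_2$ are the successors of $s$ and $d_1,d_2$ the predecessors of $d$ on $P_1,P_2$; $m=\mathrm{len}(P_1)$, $n=\mathrm{len}(P_2)$ (numbers of edges), $L=\max(m,n)$. Potential: $r_{ss_1}(t)=p_{ss_1}(t)/p_{ss_2}(t)$, $r_{d_1d}(t)=p_{d_1d}(t)/p_{d_2d}(t)$,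 and for $t\ge L$, $r_{\min}(t)=\min\{r_{ss_1}(t-i),\,r_{d_1d}(t-i):0\le i\le L-1\}$. Fixed-flow setting: $f_s(t)=\bar f>0$ and $b_d(t)=\bar b>0$ for all $t$, and all initial pheromone levels $p_{uv}(0)$ are positive. *)

theory Defs
  imports Main "HOL-Library.Extended_Real"
begin

definition fedge :: "('v \<times> 'v) set \<Rightarrow> ('v \<Rightarrow> real) \<Rightarrow> ('v \<times> 'v \<Rightarrow> real) \<Rightarrow> 'v \<Rightarrow> 'v \<Rightarrow> real" where
  "fedge E f p u v = f u * p (u, v) / (\<Sum>z\<in>{z. (u, z) \<in> E}. p (u, z))"

definition bedge :: "('v \<times> 'v) set \<Rightarrow> ('v \<Rightarrow> real) \<Rightarrow> ('v \<times> 'v \<Rightarrow> real) \<Rightarrow> 'v \<Rightarrow> 'v \<Rightarrow> real" where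
  "bedge E b p u v = b v * p (u, v) / (\<Sum>z\<in>{z. (z, v) \<in> E}. p (z, v))"

(* State (forward flows, backward flows, pheromone) at time t in the fixed-flow
   setting: f_s(t) = fbar, b_d(t) = bbar for all t. *)
primrec ant_state ::
  "('v \<times> 'v) set \<Rightarrow> 'v \<Rightarrow> 'v \<Rightarrow> ('v \<Rightarrow> real) \<Rightarrow> real \<Rightarrow> real \<Rightarrow> real \<Rightarrow>
   ('v \<Rightarrow> real) \<Rightarrow> ('v \<Rightarrow> real) \<Rightarrow> ('v \<times> 'v \<Rightarrow> real) \<Rightarrow> nat \<Rightarrow>
   ('v \<Rightarrow> real) \<times> ('v \<Rightarrow> real) \<times> ('v \<times> 'v \<Rightarrow> real)" where
  "ant_state E s d l \<delta> fbar bbar f0 b0 p0 0 = (f0, b0, p0)"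
| "ant_state E s d l \<delta> fbar bbar f0 b0 p0 (Suc t) =
     (case ant_state E s d l \<delta> fbar bbar f0 b0 p0 t of (f, b, p) \<Rightarrow>
       ((\<lambda>v. if v = s then fbar
              else (1 - l v) * (\<Sum>z\<in>{z. (z, v) \<in> E}. fedge E f p z v)),
        (\<lambda>u. if u = d then bbar
              else (1 - l u) * (\<Sum>z\<in>{z. (u, z) \<in> E}. bedge E b p u z)),
        (\<lambda>(u, v). \<delta> * (p (u, v) + fedge E f p u v + bedge E b p u v))))"

definition Fw where "Fw E s d l \<delta> fbar bbar f0 b0 p0 t = fst (ant_state E s d l \<delta> fbar bbar f0 b0 p0 t)"
definition Bw where "Bw E s d l \<delta> fbar bbar f0 b0 p0 t = fst (snd (ant_state E s d l \<delta> fbar bbar f0 b0 p0 t))"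
definition Ph where "Ph E s d l \<delta> fbar bbar f0 b0 p0 t = snd (snd (ant_state E s d l \<delta> fbar bbar f0 b0 p0 t))"

definition Bedge where
  "Bedge E s d l \<delta> fbar bbar f0 b0 p0 t u v =
     bedge E (Bw E s d l \<delta> fbar bbar f0 b0 p0 t) (Ph E s d l \<delta> fbar bbar f0 b0 p0 t) u v"

definition is_dpath :: "('v \<times> 'v) set \<Rightarrow> 'v list \<Rightarrow> bool" where
  "is_dpath E P \<longleftrightarrow> length P \<ge> 2 \<and> distinct P \<and> (\<forall>i. Suc i < length P \<longrightarrow> (P ! i, P ! Suc i) \<in> E)"

definition path_edges :: "'v list \<Rightarrow> ('v \<times> 'v) set" where
  "path_edges P = {(P ! i, P ! Suc i) | i. Suc i < length P}"

definition plen :: "'v list \<Rightarrow> nat" where "plen P = length P - 1"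

definition two_parallel_paths :: "('v \<times> 'v) set \<Rightarrow> 'v \<Rightarrow> 'v \<Rightarrow> 'v list \<Rightarrow> 'v list \<Rightarrow> bool" where
  "two_parallel_paths E s d P1 P2 \<longleftrightarrow>
     is_dpath E P1 \<and> is_dpath E P2 \<and>
     hd P1 = s \<and> last P1 = d \<and> hd P2 = s \<and> last P2 = d \<and>
     set P1 \<inter> set P2 = {s, d} \<and>
     E = path_edges P1 \<union> path_edges P2"

definition succ_s :: "'v list \<Rightarrow> 'v" where "succ_s P = P ! 1"
definition pred_d :: "'v list \<Rightarrow> 'v" where "pred_d P = P ! (length P - 2)"

definition r_min :: "(nat \<Rightarrow> real) \<Rightarrow> (nat \<Rightarrow> real) \<Rightarrow> nat \<Rightarrow> nat \<Rightarrow> real" where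
  "r_min rs rd L t = Min ((\<lambda>i. rs (t - i)) ` {..<L} \<union> (\<lambda>i. rd (t - i)) ` {..<L})"

end

theory Submission
  imports Defs
begin

lemma fedge_nn: "0 \<le> f u \<Longrightarrow> \<forall>e\<in>E. 0 < p e \<Longrightarrow> (u,v)\<in>E \<Longrightarrow> 0 \<le> fedge E f p u v"
  unfolding fedge_def
  by (intro divide_nonneg_nonneg mult_nonneg_nonneg sum_nonneg) (auto simp: less_imp_le)

lemma bedge_nn: "0 \<le> b v \<Longrightarrow> \<forall>e\<in>E. 0 < p e \<Longrightarrow> (u,v)\<in>E \<Longrightarrow> 0 \<le> bedge E b p u v"
  unfolding bedge_def
  by (intro divide_nonneg_nonneg mult_nonneg_nonneg sum_nonneg) (auto simp: less_imp_le)

lemma inv: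
  assumes "\<forall>v. 0 \<le> l v \<and> l v \<le> 1" "0 < \<delta>" "0 < fbar" "0 < bbar"
    "\<forall>v. 0 \<le> f0 v" "\<forall>v. 0 \<le> b0 v" "\<forall>e\<in>E. 0 < p0 e" "b0 d = bbar"
  shows "(\<forall>v. 0 \<le> fst (ant_state E s d l \<delta> fbar bbar f0 b0 p0 t) v)
       \<and> (\<forall>v. 0 \<le> fst (snd (ant_state E s d l \<delta> fbar bbar f0 b0 p0 t)) v)
       \<and> (\<forall>e\<in>E. 0 < snd (snd (ant_state E s d l \<delta> fbar bbar f0 b0 p0 t)) e)
       \<and> fst (snd (ant_state E s d l \<delta> fbar bbar f0 b0 p0 t)) d = bbar"
proof (induction t)
  case 0
  then show ?case using assms by simp
next
  case (Suc t)
  obtain f b p where eq: "ant_state E s d l \<delta> fbar bbar f0 b0 p0 t = (f,b,p)"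
    by (metis prod_cases3)
  have f: "\<forall>v. 0 \<le> f v" and b: "\<forall>v. 0 \<le> b v" and p: "\<forall>e\<in>E. 0 < p e"
    using Suc eq by auto
  have A: "\<forall>v. 0 \<le> (if v = s then fbar
              else (1 - l v) * (\<Sum>z\<in>{z. (z, v) \<in> E}. fedge E f p z v))"
  proof
    fix v
    show "0 \<le> (if v = s then fbar
              else (1 - l v) * (\<Sum>z\<in>{z. (z, v) \<in> E}. fedge E f p z v))"
      using assms(1,3) f p by (auto intro!: mult_nonneg_nonneg sum_nonneg fedge_nn)
  qed
  have B: "\<forall>u. 0 \<le> (if u = d then bbar
              else (1 - l u) * (\<Sum>z\<in>{z. (u, z) \<in> E}. bedge E b p u z))"
  proof
    fix u
    show "0 \<le> (if u = d then bbar
              else (1 - l u) * (\<Sum>z\<in>{z. (u, z) \<in> E}. bedge E b p u z))"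
      using assms(1,4) b p by (auto intro!: mult_nonneg_nonneg sum_nonneg bedge_nn)
  qed
  have C: "\<forall>e\<in>E. 0 < (\<lambda>(u, v). \<delta> * (p (u, v) + fedge E f p u v + bedge E b p u v)) e"
  proof
    fix e assume e: "e \<in> E"
    obtain u v where uv: "e = (u,v)" by fastforce
    have "0 \<le> fedge E f p u v" "0 \<le> bedge E b p u v" "0 < p (u,v)"
      using f b p e uv by (auto intro!: fedge_nn bedge_nn)
    then show "0 < (\<lambda>(u, v). \<delta> * (p (u, v) + fedge E f p u v + bedge E b p u v)) e"
      using uv assms(2) by simp
  qed
  have st: "ant_state E s d l \<delta> fbar bbar f0 b0 p0 (Suc t) =
     ((\<lambda>v. if v = s then fbar
              else (1 - l v) * (\<Sum>z\<in>{z. (z, v) \<in> E}. fedge E f p z v)),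
        (\<lambda>u. if u = d then bbar
              else (1 - l u) * (\<Sum>z\<in>{z. (u, z) \<in> E}. bedge E b p u z)),
        (\<lambda>(u, v). \<delta> * (p (u, v) + fedge E f p u v + bedge E b p u v)))"
    by (simp only: ant_state.simps eq prod.case)
  show ?case unfolding st fst_conv snd_conv
    apply (intro conjI)
    apply (rule A)
    apply (rule B)
    apply (rule C)
    apply (rule if_P, rule refl)
    done
qed

lemma pe_last:
  assumes "is_dpath E P" "last P = d"
  shows "(z,d) \<in> path_edges P \<longleftrightarrow> z = pred_d P"
proof
  have len: "length P \<ge> 2" and dist: "distinct P" using assms(1) unfolding is_dpath_def by auto
  have ne: "P \<noteq> []" using len by auto
  have ld: "P ! (length P - 1) = d" using assms(2) last_conv_nth[OF ne] by simp
  {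
    assume "(z,d) \<in> path_edges P"
    then obtain i where i: "z = P ! i" "d = P ! Suc i" "Suc i < length P"
      unfolding path_edges_def by auto
    have "Suc i = length P - 1"
    proof -
      have "P ! Suc i = P ! (length P - 1)" using i(2) ld by simp
      moreover have "length P - 1 < length P" using len by simp
      ultimately show ?thesis using nth_eq_iff_index_eq[OF dist i(3)] by blast
    qed
    then have "i = length P - 2" by simp
    then show "z = pred_d P" using i unfolding pred_d_def by simp
  }
  {
    assume z: "z = pred_d P"
    have "z = P ! (length P - 2)" "d = P ! Suc (length P - 2)" "Suc (length P - 2) < length P"
      using z ld len unfolding pred_d_def by (auto simp: Suc_diff_Suc numeral_2_eq_2)
    then show "(z,d) \<in> path_edges P" unfolding path_edges_def by blast
  }
qed

lemma alg:
  fixes a1 b1 a2 b2 c :: real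
  assumes "0 < a1" "0 < b1" "0 < a2" "0 < b2" "0 < c"
  shows "(c * a1 / (a1 + b1)) / (c * b2 / (a2 + b2)) \<ge> min (a1/b1) (a2/b2)"
proof -
  have eq: "(c * a1 / (a1 + b1)) / (c * b2 / (a2 + b2)) = a1 * (a2 + b2) / ((a1 + b1) * b2)"
  proof -
    have "(c * a1 / (a1 + b1)) / (c * b2 / (a2 + b2)) = (c * (a1 * (a2 + b2))) / (c * ((a1 + b1) * b2))"
      using assms by (simp add: mult.commute mult.left_commute)
    also have "\<dots> = a1 * (a2 + b2) / ((a1 + b1) * b2)"
      using assms by (subst mult_divide_mult_cancel_left) auto
    finally show ?thesis .
  qed
  show ?thesis
  proof (cases "a1/b1 \<le> a2/b2")
    case True
    then have "a1 * b2 \<le> a2 * b1" using assms by (simp add: field_simps)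
    then have "a1 * (a1 * b2) \<le> a1 * (a2 * b1)" using assms by simp
    then have "a1 * ((a1 + b1) * b2) \<le> a1 * (a2 + b2) * b1" by (simp add: algebra_simps)
    then have "a1/b1 \<le> a1 * (a2 + b2) / ((a1 + b1) * b2)" using assms
      using mult_pos_pos[OF add_pos_pos[OF assms(1,2)] assms(4)]
      by (simp add: pos_divide_le_eq pos_le_divide_eq mult.commute mult.left_commute)
    then show ?thesis using eq by simp
  next
    case False
    then have "a2 * b1 \<le> a1 * b2" using assms by (simp add: field_simps)
    then have "b2 * (a2 * b1) \<le> b2 * (a1 * b2)" using assms by simp
    then have "a2 * ((a1 + b1) * b2) \<le> a1 * (a2 + b2) * b2" by (simp add: algebra_simps)
    then have "a2/b2 \<le> a1 * (a2 + b2) / ((a1 + b1) * b2)" using assms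
      using mult_pos_pos[OF add_pos_pos[OF assms(1,2)] assms(4)]
      by (simp add: pos_divide_le_eq pos_le_divide_eq mult.commute mult.left_commute)
    then show ?thesis using eq by simp
  qed
qed

lemma part2:
  assumes "0 < m" "m \<le> L" "L \<le> t"
  shows "r_min rs rd L t \<le> rd (t - m + 1)"
proof -
  have eq: "Suc (t - m) = t - (m - Suc 0)" using assms by simp
  have "m - 1 \<in> {..<L}" using assms by simp
  then have "rd (t - m + 1) \<in> (\<lambda>i. rs (t - i)) ` {..<L} \<union> (\<lambda>i. rd (t - i)) ` {..<L}"
    by (intro UnI2 image_eqI[of _ _ "m-1"]) (use eq in simp_all)
  then show ?thesis unfolding r_min_def by (intro Min_le) auto
qed

lemma plen_pos: "is_dpath E P \<Longrightarrow> 0 < plen P"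
  unfolding is_dpath_def plen_def by auto

lemma part1:
  fixes E :: "('v \<times> 'v) set" and s d :: 'v and P1 P2 :: "'v list"
    and l :: "'v \<Rightarrow> real" and \<delta> fbar bbar :: real
    and f0 b0 :: "'v \<Rightarrow> real" and p0 :: "'v \<times> 'v \<Rightarrow> real"
  assumes "two_parallel_paths E s d P1 P2"
    and "\<forall>v. 0 \<le> l v \<and> l v \<le> 1"
    and "0 < \<delta>" and "0 < fbar" and "0 < bbar"
    and "b0 d = bbar"
    and "\<forall>v. 0 \<le> f0 v" and "\<forall>v. 0 \<le> b0 v"
    and "\<forall>e\<in>E. 0 < p0 e"
  shows "Bedge E s d l \<delta> fbar bbar f0 b0 p0 \<tau>1 (pred_d P1) d / Bedge E s d l \<delta> fbar bbar f0 b0 p0 \<tau>2 (pred_d P2) d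
     \<ge> min (Ph E s d l \<delta> fbar bbar f0 b0 p0 \<tau>1 (pred_d P1, d) / Ph E s d l \<delta> fbar bbar f0 b0 p0 \<tau>1 (pred_d P2, d))
            (Ph E s d l \<delta> fbar bbar f0 b0 p0 \<tau>2 (pred_d P1, d) / Ph E s d l \<delta> fbar bbar f0 b0 p0 \<tau>2 (pred_d P2, d))"
proof -
  define d1 d2 where "d1 = pred_d P1" and "d2 = pred_d P2"
  define p where "p = Ph E s d l \<delta> fbar bbar f0 b0 p0"
  have I: "\<And>\<tau>. Bw E s d l \<delta> fbar bbar f0 b0 p0 \<tau> d = bbar \<and> (\<forall>e\<in>E. 0 < p \<tau> e)"
    using inv[OF assms(2,3,4,5,7,8,9,6)] unfolding Bw_def Ph_def p_def by blast
  have tp: "is_dpath E P1" "is_dpath E P2" "last P1 = d" "last P2 = d"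
    "E = path_edges P1 \<union> path_edges P2"
    using assms(1) unfolding two_parallel_paths_def by auto
  have N: "{z. (z,d) \<in> E} = {d1, d2}"
    using pe_last[OF tp(1,3)] pe_last[OF tp(2,4)] tp(5) unfolding d1_def d2_def by auto
  have e1: "(d1, d) \<in> E" and e2: "(d2, d) \<in> E" using N by auto
  have BE: "\<And>\<tau> u. Bedge E s d l \<delta> fbar bbar f0 b0 p0 \<tau> u d = bbar * p \<tau> (u, d) / (\<Sum>z\<in>{d1,d2}. p \<tau> (z, d))"
    unfolding Bedge_def bedge_def N using I unfolding p_def by simp
  show ?thesis
  proof (cases "d1 = d2")
    case True
    have "\<And>\<tau>. Bedge E s d l \<delta> fbar bbar f0 b0 p0 \<tau> d1 d = bbar"
      using BE I e1 True by (simp add: less_imp_neq[symmetric])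
    moreover have "\<And>\<tau>. p \<tau> (d1, d) / p \<tau> (d1, d) = 1"
      using I e1 by (simp add: less_imp_neq[symmetric])
    ultimately show ?thesis using True assms(5) unfolding d1_def[symmetric] d2_def[symmetric] p_def[symmetric]
      by simp
  next
    case False
    have "\<And>\<tau> u. Bedge E s d l \<delta> fbar bbar f0 b0 p0 \<tau> u d = bbar * p \<tau> (u, d) / (p \<tau> (d1, d) + p \<tau> (d2, d))"
      using BE False by simp
    then show ?thesis unfolding d1_def[symmetric] d2_def[symmetric] p_def[symmetric]
      using alg[of "p \<tau>1 (d1,d)" "p \<tau>1 (d2,d)" "p \<tau>2 (d1,d)" "p \<tau>2 (d2,d)" bbar] I e1 e2 assms(5)
      by simp
  qed
qed

theorem mainTheorem6:
  fixes E :: "('v \<times> 'v) set" and s d :: 'v and P1 P2 :: "'v list"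
    and l :: "'v \<Rightarrow> real" and \<delta> fbar bbar :: real
    and f0 b0 :: "'v \<Rightarrow> real" and p0 :: "'v \<times> 'v \<Rightarrow> real" and t :: nat
  assumes "finite E"
    and "two_parallel_paths E s d P1 P2"
    and "\<forall>v. 0 \<le> l v \<and> l v \<le> 1"
    and "0 < \<delta>" and "\<delta> < 1"
    and "0 < fbar" and "0 < bbar"
    and "f0 s = fbar" and "b0 d = bbar"
    and "\<forall>v. 0 \<le> f0 v" and "\<forall>v. 0 \<le> b0 v"
    and "\<forall>e\<in>E. 0 < p0 e"
    and "t \<ge> max (plen P1) (plen P2)"
  shows
   "let m = plen P1; n = plen P2; L = max m n;
        s1 = succ_s P1; s2 = succ_s P2; d1 = pred_d P1; d2 = pred_d P2;
        p = Ph E s d l \<delta> fbar bbar f0 b0 p0;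
        bb = Bedge E s d l \<delta> fbar bbar f0 b0 p0;
        rs = (\<lambda>\<tau>. p \<tau> (s, s1) / p \<tau> (s, s2));
        rd = (\<lambda>\<tau>. p \<tau> (d1, d) / p \<tau> (d2, d))
    in bb (t - m + 1) d1 d / bb (t - n + 1) d2 d \<ge> min (rd (t - m + 1)) (rd (t - n + 1))
       \<and> min (rd (t - m + 1)) (rd (t - n + 1)) \<ge> r_min rs rd L t"
proof -
  have tp: "is_dpath E P1" "is_dpath E P2"
    using assms(2) unfolding two_parallel_paths_def by auto
  note P1 = part1[OF assms(2,3,4,6,7,9,10,11,12)]
  show ?thesis unfolding Let_def
  proof (intro conjI)
    show "min (Ph E s d l \<delta> fbar bbar f0 b0 p0 (t - plen P1 + 1) (pred_d P1, d) /
          Ph E s d l \<delta> fbar bbar f0 b0 p0 (t - plen P1 + 1) (pred_d P2, d))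
     (Ph E s d l \<delta> fbar bbar f0 b0 p0 (t - plen P2 + 1) (pred_d P1, d) /
      Ph E s d l \<delta> fbar bbar f0 b0 p0 (t - plen P2 + 1) (pred_d P2, d))
    \<le> Bedge E s d l \<delta> fbar bbar f0 b0 p0 (t - plen P1 + 1) (pred_d P1) d /
       Bedge E s d l \<delta> fbar bbar f0 b0 p0 (t - plen P2 + 1) (pred_d P2) d"
      by (rule P1)
  next
    show "r_min (\<lambda>\<tau>. Ph E s d l \<delta> fbar bbar f0 b0 p0 \<tau> (s, succ_s P1) / Ph E s d l \<delta> fbar bbar f0 b0 p0 \<tau> (s, succ_s P2))
     (\<lambda>\<tau>. Ph E s d l \<delta> fbar bbar f0 b0 p0 \<tau> (pred_d P1, d) / Ph E s d l \<delta> fbar bbar f0 b0 p0 \<tau> (pred_d P2, d))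
     (max (plen P1) (plen P2)) t
    \<le> min (Ph E s d l \<delta> fbar bbar f0 b0 p0 (t - plen P1 + 1) (pred_d P1, d) /
          Ph E s d l \<delta> fbar bbar f0 b0 p0 (t - plen P1 + 1) (pred_d P2, d))
     (Ph E s d l \<delta> fbar bbar f0 b0 p0 (t - plen P2 + 1) (pred_d P1, d) /
      Ph E s d l \<delta> fbar bbar f0 b0 p0 (t - plen P2 + 1) (pred_d P2, d))"
      using plen_pos[OF tp(1)] plen_pos[OF tp(2)] assms(13)
      by (intro min.boundedI part2) auto
  qed
qed

end
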